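(* Let $r=r(n)$ be integers with $r\ge 2$ and $r=o(n^{1/2})$. Then $$\Pr(\mathcal A_3)=\frac{1-o(1)}{1+\frac{(r-1)^3}{n}(1+o(1))}\qquad(n\to\infty).$$ In particular, if $r/n^{1/3}\to c\in[0,\infty)$ then $\Pr(\mathcal A_3)\to 1/(1+c^3)$.
   Context: Random intersecting process: Let $[n]=\{1,\dots,n\}$ and $\binom{[n]}{r}$ the family of $r$-subsets of $[n]$. Choose $e_1$ uniformly at random from $\binom{[n]}{r}$. Given $\mathcal F_i=\{e_1,\dots,e_i\}$, let $\mathcal A(\mathcal F_i)=\{e\in\binom{[n]}{r}: e\notin\mathcal F_i,\ e\cap e_j\neq\emptyset \text{ for all } 1\le j\le i\}$, and choose $e_{i+1}$ uniformly at random from $\mathcal A(\mathcal F_i)$. The process halts when $\mathcal A(\mathcal F_i)=\emptyset$. A star is a collection of sets such that every pair of them has the same one-element intersection $\{x\}$ ($x$ is the kernel); a single set is a $1$-star by convention. For $i\ge1$, $\mathcal A_i$ is the event that at least $i$ edges are chosen and $\mathcal F_i$ is an $i$-star. *)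

theory Defs
  imports "HOL-Probability.Probability" "HOL-Library.Landau_Symbols"
begin

definition adm :: "nat \<Rightarrow> nat \<Rightarrow> nat set set \<Rightarrow> nat set set" where
  "adm n r F = {e. e \<subseteq> {1..n} \<and> card e = r \<and> e \<notin> F \<and> (\<forall>f\<in>F. e \<inter> f \<noteq> {})}"

definition is_star :: "'a set set \<Rightarrow> bool" where
  "is_star F = (\<exists>x. \<forall>e\<in>F. \<forall>f\<in>F. e \<noteq> f \<longrightarrow> e \<inter> f = {x})"

definition proc_step :: "nat \<Rightarrow> nat \<Rightarrow> nat set set \<Rightarrow> nat set option pmf" where
  "proc_step n r F = (if adm n r F = {} then return_pmf None
                      else map_pmf Some (pmf_of_set (adm n r F)))"

definition first3 :: "nat \<Rightarrow> nat \<Rightarrow> (nat set \<times> nat set \<times> nat set) option pmf" where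
  "first3 n r =
     bind_pmf (proc_step n r {}) (\<lambda>o1. (case o1 of None \<Rightarrow> return_pmf None | Some e1 \<Rightarrow>
     bind_pmf (proc_step n r {e1}) (\<lambda>o2. (case o2 of None \<Rightarrow> return_pmf None | Some e2 \<Rightarrow>
     bind_pmf (proc_step n r {e1, e2}) (\<lambda>o3. (case o3 of None \<Rightarrow> return_pmf None | Some e3 \<Rightarrow>
       return_pmf (Some (e1, e2, e3))))))))"

definition PrA3 :: "nat \<Rightarrow> nat \<Rightarrow> real" where
  "PrA3 n r = measure_pmf.prob (first3 n r)
     {Some (e1, e2, e3) | e1 e2 e3. is_star {e1, e2, e3}}"

end

theory Submission
  imports Defs
begin

lemma card_sup:
  assumes "finite X" "P \<subseteq> X" "Z \<subseteq> X" "P \<inter> Z = {}" "card P \<le> k"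
  shows "card {e. e \<subseteq> X \<and> card e = k \<and> P \<subseteq> e \<and> e \<inter> Z = {}}
         = (card X - card P - card Z) choose (k - card P)"
proof -
  have fP: "finite P" using assms finite_subset by blast
  have fZ: "finite Z" using assms finite_subset by blast
  have eq: "{e. e \<subseteq> X \<and> card e = k \<and> P \<subseteq> e \<and> e \<inter> Z = {}}
      = (\<lambda>R. P \<union> R) ` {R. R \<subseteq> X - P - Z \<and> card R = k - card P}"
  proof (rule set_eqI, rule iffI)
    fix e assume e: "e \<in> {e. e \<subseteq> X \<and> card e = k \<and> P \<subseteq> e \<and> e \<inter> Z = {}}"
    then have fe: "finite e" using assms finite_subset by blast
    have "card (e - P) = k - card P" using e fe fP by (simp add: card_Diff_subset)
    moreover have "e = P \<union> (e - P)" using e by blast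
    moreover have "e - P \<subseteq> X - P - Z" using e by blast
    ultimately show "e \<in> (\<lambda>R. P \<union> R) ` {R. R \<subseteq> X - P - Z \<and> card R = k - card P}" by blast
  next
    fix e assume "e \<in> (\<lambda>R. P \<union> R) ` {R. R \<subseteq> X - P - Z \<and> card R = k - card P}"
    then obtain R where R: "R \<subseteq> X - P - Z" "card R = k - card P" "e = P \<union> R" by blast
    have fR: "finite R" using R assms finite_subset by blast
    have "P \<inter> R = {}" using R by blast
    then have "card e = card P + card R" using R fR fP by (simp add: card_Un_disjoint)
    then show "e \<in> {e. e \<subseteq> X \<and> card e = k \<and> P \<subseteq> e \<and> e \<inter> Z = {}}"
      using R assms by auto
  qed
  have inj: "inj_on (\<lambda>R. P \<union> R) {R. R \<subseteq> X - P - Z \<and> card R = k - card P}"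
    by (rule inj_onI) blast
  have cXPZ: "card (X - P - Z) = card X - card P - card Z"
  proof -
    have "card (X - P - Z) = card (X - P) - card Z"
      using assms fZ by (subst card_Diff_subset) auto
    also have "card (X - P) = card X - card P" using assms fP by (simp add: card_Diff_subset)
    finally show ?thesis .
  qed
  show ?thesis unfolding eq using inj
    by (simp add: card_image n_subsets assms cXPZ)
qed

lemma finite_adm: "finite (adm n r F)"
proof -
  have "adm n r F \<subseteq> Pow {1..n}" unfolding adm_def by auto
  then show ?thesis by (rule finite_subset) simp
qed

lemma F1:
  assumes r2: "2 \<le> r" and nr: "2*r \<le> n"
    and e1: "e1 \<subseteq> {1..n}" "card e1 = r" and e2: "e2 \<subseteq> {1..n}" "card e2 = r"
    and x: "e1 \<inter> e2 = {x}"
  shows "card {e3 \<in> adm n r {e1,e2}. is_star {e1,e2,e3}} = (n-2*r+1) choose (r-1)"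
    and "card (adm n r {e1,e2}) \<ge> ((n-2*r+1) choose (r-1)) + (r-1)^2 * ((n-2*r+1) choose (r-2))"
    and "card (adm n r {e1,e2}) \<le> ((n-1) choose (r-1)) + (r-1)^2 * ((n-2) choose (r-2))"
proof -
  define X where "X = {1..n::nat}"
  define A where "A = e1 - {x}"
  define B where "B = e2 - {x}"
  have fX: "finite X" and cX: "card X = n" unfolding X_def by auto
  have f1: "finite e1" and f2: "finite e2" using e1 e2 finite_subset by (auto simp: finite_subset)
  have xe1: "x \<in> e1" and xe2: "x \<in> e2" using x by auto
  have cA: "card A = r - 1" unfolding A_def using xe1 f1 e1 by simp
  have cB: "card B = r - 1" unfolding B_def using xe2 f2 e2 by simp
  have AB: "A \<inter> B = {}" unfolding A_def B_def using x by blast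
  have fA: "finite A" "finite B" unfolding A_def B_def using f1 f2 by auto
  have cAB: "card (A \<union> B) = 2*r - 2" using cA cB AB fA card_Un_disjoint by fastforce
  have e1A: "e1 = insert x A" and e2B: "e2 = insert x B" unfolding A_def B_def using xe1 xe2 by auto
  have xA: "x \<notin> A" "x \<notin> B" unfolding A_def B_def by auto
  have Ane: "A \<noteq> {}" "B \<noteq> {}" using cA cB r2 by auto
  have ABX: "A \<subseteq> X" "B \<subseteq> X" "x \<in> X" using e1 e2 xe1 unfolding A_def B_def X_def by auto
  have ne12: "e1 \<noteq> e2"
  proof
    assume "e1 = e2" then have "e1 = {x}" using x by simp
    then show False using e1 r2 by simp
  qed
  define St where "St = {e. e \<subseteq> X \<and> card e = r \<and> {x} \<subseteq> e \<and> e \<inter> (A \<union> B) = {}}"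
  have cSt: "card St = (n-2*r+1) choose (r-1)"
  proof -
    have "card St = (card X - card {x} - card (A \<union> B)) choose (r - card {x})"
      unfolding St_def by (rule card_sup) (use fX ABX xA r2 in auto)
    also have "\<dots> = (n-2*r+1) choose (r-1)" using cX cAB r2 nr
      by (simp add: Suc_diff_le)
    finally show ?thesis .
  qed
  have StE: "{e3 \<in> adm n r {e1,e2}. is_star {e1,e2,e3}} = St"
  proof (rule set_eqI, rule iffI)
    fix e3 assume h: "e3 \<in> {e3 \<in> adm n r {e1,e2}. is_star {e1,e2,e3}}"
    then obtain y where y: "\<forall>e\<in>{e1,e2,e3}. \<forall>f\<in>{e1,e2,e3}. e \<noteq> f \<longrightarrow> e \<inter> f = {y}"
      unfolding is_star_def by blast
    have ad: "e3 \<subseteq> {1..n}" "card e3 = r" "e3 \<noteq> e1" "e3 \<noteq> e2"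
      using h unfolding adm_def by auto
    have "e1 \<inter> e2 = {y}" using y[rule_format, of e1 e2] ne12 by simp
    then have yx: "y = x" using x by auto
    have "e3 \<inter> e1 = {x}" using y[rule_format, of e3 e1] ad yx by simp
    moreover have "e3 \<inter> e2 = {x}" using y[rule_format, of e3 e2] ad yx by simp
    ultimately have "x \<in> e3" "e3 \<inter> A = {}" "e3 \<inter> B = {}" unfolding A_def B_def by auto
    then show "e3 \<in> St" unfolding St_def X_def using ad by auto
  next
    fix e3 assume h: "e3 \<in> St"
    have i1: "e3 \<inter> e1 = {x}" and i2: "e3 \<inter> e2 = {x}" using h e1A e2B unfolding St_def by auto
    have n1: "e3 \<noteq> e1" using h Ane e1A unfolding St_def by auto
    have n2: "e3 \<noteq> e2" using h Ane e2B unfolding St_def by auto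
    have "e3 \<in> adm n r {e1,e2}" using h i1 i2 n1 n2 unfolding adm_def St_def X_def by auto
    moreover have "is_star {e1,e2,e3}" unfolding is_star_def
    proof (rule exI[of _ x])
      have j: "e1 \<inter> e3 = {x}" "e2 \<inter> e3 = {x}" "e2 \<inter> e1 = {x}" using i1 i2 x by blast+
      show "\<forall>e\<in>{e1,e2,e3}. \<forall>f\<in>{e1,e2,e3}. e \<noteq> f \<longrightarrow> e \<inter> f = {x}"
        using i1 i2 x j by auto
    qed
    ultimately show "e3 \<in> {e3 \<in> adm n r {e1,e2}. is_star {e1,e2,e3}}" by simp
  qed
  show "card {e3 \<in> adm n r {e1,e2}. is_star {e1,e2,e3}} = (n-2*r+1) choose (r-1)"
    using StE cSt by simp
  define M where "M = (\<lambda>p::nat\<times>nat. {e. e \<subseteq> X \<and> card e = r \<and> {fst p, snd p} \<subseteq> e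
                       \<and> e \<inter> ((e1 \<union> e2) - {fst p, snd p}) = {}})"
  have c12: "card (e1 \<union> e2) = 2*r - 1"
    using card_Un_Int[OF f1 f2] x e1 e2 by simp
  have cM: "card (M p) = (n-2*r+1) choose (r-2)" if p: "p \<in> A \<times> B" for p
  proof -
    have ab: "fst p \<in> A" "snd p \<in> B" using p by auto
    have neq: "fst p \<noteq> snd p" using ab AB by auto
    have sub: "{fst p, snd p} \<subseteq> e1 \<union> e2" using ab unfolding A_def B_def by auto
    have cZ: "card ((e1 \<union> e2) - {fst p, snd p}) = 2*r - 3"
      using sub c12 neq f1 f2 by (simp add: card_Diff_subset)
    have "card (M p) = (card X - card {fst p, snd p} - card ((e1 \<union> e2) - {fst p, snd p}))
                         choose (r - card {fst p, snd p})"
      unfolding M_def by (rule card_sup) (use fX ab ABX neq r2 e1 e2 X_def in auto)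
    also have "\<dots> = (n - 2 - (2*r-3)) choose (r-2)" using cX cZ neq by (simp add: numeral_2_eq_2)
    also have "n - 2 - (2*r-3) = n-2*r+1" using r2 nr by linarith
    finally show ?thesis .
  qed
  have Madm: "M p \<subseteq> adm n r {e1,e2}" if p: "p \<in> A \<times> B" for p
  proof
    fix e assume e: "e \<in> M p"
    have ab: "fst p \<in> A" "snd p \<in> B" using p by auto
    have "x \<notin> e" using e xA ab xe1 unfolding M_def by auto
    then show "e \<in> adm n r {e1,e2}" using e ab xe1 xe2 unfolding M_def adm_def X_def A_def B_def
      by auto
  qed
  have Stadm: "St \<subseteq> adm n r {e1,e2}" using StE by auto
  have fM: "finite (M p)" for p unfolding M_def using fX by (auto intro: finite_subset)
  have disjM: "M p \<inter> M q = {}" if "p \<in> A \<times> B" "q \<in> A \<times> B" "p \<noteq> q" for p q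
  proof -
    obtain a b a' b' where pq: "p = (a,b)" "q = (a',b')" by (cases p, cases q)
    have ab: "a \<in> A" "b \<in> B" "a' \<in> A" "b' \<in> B" using that pq by auto
    have "a \<noteq> a' \<or> b \<noteq> b'" using that pq by auto
    then show ?thesis using ab AB unfolding M_def pq A_def B_def by auto
  qed
  have disjSt: "St \<inter> (\<Union>p\<in>A\<times>B. M p) = {}"
    unfolding St_def M_def using xA by auto
  have cU: "card (\<Union>p\<in>A\<times>B. M p) = (r-1)^2 * ((n-2*r+1) choose (r-2))"
  proof -
    have "card (\<Union>p\<in>A\<times>B. M p) = (\<Sum>p\<in>A\<times>B. card (M p))"
      by (rule card_UN_disjoint) (use fA fM disjM in auto)
    also have "\<dots> = (\<Sum>p\<in>A\<times>B. (n-2*r+1) choose (r-2))" using cM by simp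
    also have "\<dots> = (r-1)^2 * ((n-2*r+1) choose (r-2))"
      using cA cB fA by (simp add: card_cartesian_product power2_eq_square)
    finally show ?thesis .
  qed
  have fSt: "finite St" unfolding St_def using fX by (auto intro: finite_subset)
  have "card (St \<union> (\<Union>p\<in>A\<times>B. M p)) \<le> card (adm n r {e1,e2})"
    by (rule card_mono[OF finite_adm]) (use Madm Stadm in blast)
  moreover have "card (St \<union> (\<Union>p\<in>A\<times>B. M p)) = card St + card (\<Union>p\<in>A\<times>B. M p)"
    by (rule card_Un_disjoint) (use fSt fM fA disjSt in auto)
  ultimately show "card (adm n r {e1,e2}) \<ge> ((n-2*r+1) choose (r-1)) + (r-1)^2 * ((n-2*r+1) choose (r-2))"
    using cSt cU by simp
  define U1 where "U1 = {e. e \<subseteq> X \<and> card e = r \<and> {x} \<subseteq> e \<and> e \<inter> {} = {}}"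
  define M' where "M' = (\<lambda>p::nat\<times>nat. {e. e \<subseteq> X \<and> card e = r \<and> {fst p, snd p} \<subseteq> e \<and> e \<inter> {} = {}})"
  have cU1: "card U1 = (n-1) choose (r-1)"
  proof -
    have "card U1 = (card X - card {x} - card ({}::nat set)) choose (r - card {x})"
      unfolding U1_def by (rule card_sup) (use fX ABX r2 in auto)
    then show ?thesis using cX by simp
  qed
  have cM': "card (M' p) = (n-2) choose (r-2)" if p: "p \<in> A \<times> B" for p
  proof -
    have ab: "fst p \<in> A" "snd p \<in> B" using p by auto
    have neq: "fst p \<noteq> snd p" using ab AB by auto
    have "card (M' p) = (card X - card {fst p, snd p} - card ({}::nat set))
                         choose (r - card {fst p, snd p})"
      unfolding M'_def by (rule card_sup) (use fX ab ABX neq r2 in auto)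
    then show ?thesis using cX neq by (simp add: numeral_2_eq_2)
  qed
  have fM': "finite (M' p)" for p unfolding M'_def using fX by (auto intro: finite_subset)
  have fU1: "finite U1" unfolding U1_def using fX by (auto intro: finite_subset)
  have cover: "adm n r {e1,e2} \<subseteq> U1 \<union> (\<Union>p\<in>A\<times>B. M' p)"
  proof
    fix e assume e: "e \<in> adm n r {e1,e2}"
    show "e \<in> U1 \<union> (\<Union>p\<in>A\<times>B. M' p)"
    proof (cases "x \<in> e")
      case True then show ?thesis using e unfolding U1_def adm_def X_def by auto
    next
      case False
      obtain a where a: "a \<in> e" "a \<in> e1" using e unfolding adm_def by auto
      obtain b where b: "b \<in> e" "b \<in> e2" using e unfolding adm_def by auto
      have "(a,b) \<in> A \<times> B" using a b False unfolding A_def B_def by auto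
      moreover have "e \<in> M' (a,b)" using e a b unfolding M'_def adm_def X_def by auto
      ultimately show ?thesis by blast
    qed
  qed
  have "card (adm n r {e1,e2}) \<le> card (U1 \<union> (\<Union>p\<in>A\<times>B. M' p))"
    by (rule card_mono[OF _ cover]) (use fU1 fM' fA in auto)
  also have "\<dots> \<le> card U1 + card (\<Union>p\<in>A\<times>B. M' p)" by (rule card_Un_le)
  also have "card (\<Union>p\<in>A\<times>B. M' p) \<le> (\<Sum>p\<in>A\<times>B. card (M' p))"
    by (rule card_UN_le) (use fA in auto)
  also have "(\<Sum>p\<in>A\<times>B. card (M' p)) = (r-1)^2 * ((n-2) choose (r-2))"
    using cM' cA cB fA by (simp add: card_cartesian_product power2_eq_square)
  finally show "card (adm n r {e1,e2}) \<le> ((n-1) choose (r-1)) + (r-1)^2 * ((n-2) choose (r-2))"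
    using cU1 by simp
qed

lemma F2:
  assumes "e1 \<noteq> e2" "\<not> (\<exists>x. e1 \<inter> e2 = {x})"
  shows "{e3 \<in> adm n r {e1,e2}. is_star {e1,e2,e3}} = {}"
proof -
  have "\<not> is_star {e1,e2,e3}" for e3
  proof
    assume "is_star {e1,e2,e3}"
    then obtain y where y: "\<forall>e\<in>{e1,e2,e3}. \<forall>f\<in>{e1,e2,e3}. e \<noteq> f \<longrightarrow> e \<inter> f = {y}"
      unfolding is_star_def by blast
    have "e1 \<inter> e2 = {y}" using y[rule_format, of e1 e2] assms(1) by simp
    then show False using assms(2) by blast
  qed
  then show ?thesis by auto
qed

lemma F3:
  assumes r2: "2 \<le> r" and nr: "2*r \<le> n"
    and e1: "e1 \<subseteq> {1..n}" "card e1 = r"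
  shows "card {e2 \<in> adm n r {e1}. \<exists>x. e1 \<inter> e2 = {x}} = r * ((n-r) choose (r-1))"
    and "card {e2 \<in> adm n r {e1}. \<not> (\<exists>x. e1 \<inter> e2 = {x})} \<le> (r choose 2) * ((n-2) choose (r-2))"
proof -
  define X where "X = {1..n::nat}"
  have fX: "finite X" and cX: "card X = n" unfolding X_def by auto
  have f1: "finite e1" using e1 finite_subset by auto
  define G where "G = (\<lambda>x. {e. e \<subseteq> X \<and> card e = r \<and> {x} \<subseteq> e \<and> e \<inter> (e1 - {x}) = {}})"
  have cG: "card (G x) = (n-r) choose (r-1)" if x: "x \<in> e1" for x
  proof -
    have "card (G x) = (card X - card {x} - card (e1 - {x})) choose (r - card {x})"
      unfolding G_def by (rule card_sup) (use fX x e1 r2 X_def in auto)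
    also have "\<dots> = (n - 1 - (r - 1)) choose (r-1)" using cX x f1 e1 by simp
    also have "n - 1 - (r - 1) = n - r" using r2 nr by linarith
    finally show ?thesis .
  qed
  have GE: "{e2 \<in> adm n r {e1}. \<exists>x. e1 \<inter> e2 = {x}} = (\<Union>x\<in>e1. G x)"
  proof (rule set_eqI, rule iffI)
    fix e assume h: "e \<in> {e2 \<in> adm n r {e1}. \<exists>x. e1 \<inter> e2 = {x}}"
    then obtain x where x: "e1 \<inter> e = {x}" by blast
    then have "x \<in> e1" "e \<in> G x" using h unfolding G_def adm_def X_def by auto
    then show "e \<in> (\<Union>x\<in>e1. G x)" by blast
  next
    fix e assume "e \<in> (\<Union>x\<in>e1. G x)"
    then obtain x where x: "x \<in> e1" "e \<in> G x" by blast
    have i: "e1 \<inter> e = {x}" using x unfolding G_def by auto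
    have "card (e1 - {x}) = r - 1" using x f1 e1 by simp
    then have "e1 - {x} \<noteq> {}" using r2 by (intro notI) simp
    then have "e \<noteq> e1" using x unfolding G_def by auto
    then show "e \<in> {e2 \<in> adm n r {e1}. \<exists>x. e1 \<inter> e2 = {x}}"
      using x i unfolding G_def adm_def X_def by auto
  qed
  have fG: "finite (G x)" for x unfolding G_def using fX by (auto intro: finite_subset)
  have "card (\<Union>x\<in>e1. G x) = (\<Sum>x\<in>e1. card (G x))"
  proof (rule card_UN_disjoint[OF f1])
    show "\<forall>i\<in>e1. finite (G i)" using fG by blast
    show "\<forall>i\<in>e1. \<forall>j\<in>e1. i \<noteq> j \<longrightarrow> G i \<inter> G j = {}"
    proof (intro ballI impI)
      fix i j assume "i \<in> e1" "j \<in> e1" "i \<noteq> j"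
      then show "G i \<inter> G j = {}" unfolding G_def by blast
    qed
  qed
  also have "\<dots> = r * ((n-r) choose (r-1))" using cG e1 by simp
  finally show "card {e2 \<in> adm n r {e1}. \<exists>x. e1 \<inter> e2 = {x}} = r * ((n-r) choose (r-1))"
    using GE by simp
  define H where "H = (\<lambda>P. {e. e \<subseteq> X \<and> card e = r \<and> P \<subseteq> e \<and> e \<inter> {} = {}})"
  define I where "I = {P. P \<subseteq> e1 \<and> card P = 2}"
  have cI: "card I = r choose 2" unfolding I_def using n_subsets[OF f1] e1 by simp
  have fI: "finite I" unfolding I_def using f1 by auto
  have cH: "card (H P) = (n-2) choose (r-2)" if P: "P \<in> I" for P
  proof -
    have "card (H P) = (card X - card P - card ({}::nat set)) choose (r - card P)"
      unfolding H_def by (rule card_sup) (use fX P e1 r2 X_def I_def in auto)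
    then show ?thesis using cX P unfolding I_def by simp
  qed
  have cover: "{e2 \<in> adm n r {e1}. \<not> (\<exists>x. e1 \<inter> e2 = {x})} \<subseteq> (\<Union>P\<in>I. H P)"
  proof
    fix e assume h: "e \<in> {e2 \<in> adm n r {e1}. \<not> (\<exists>x. e1 \<inter> e2 = {x})}"
    then obtain u where u: "u \<in> e1" "u \<in> e" unfolding adm_def by auto
    have "e1 \<inter> e \<noteq> {u}" using h by blast
    then obtain v where v: "v \<in> e1" "v \<in> e" "v \<noteq> u" using u by blast
    have "{u,v} \<in> I" using u v unfolding I_def by auto
    moreover have "e \<in> H {u,v}" using h u v unfolding H_def adm_def X_def by auto
    ultimately show "e \<in> (\<Union>P\<in>I. H P)" by blast
  qed
  have fH: "finite (H P)" for P unfolding H_def using fX by (auto intro: finite_subset)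
  have "card {e2 \<in> adm n r {e1}. \<not> (\<exists>x. e1 \<inter> e2 = {x})} \<le> card (\<Union>P\<in>I. H P)"
    by (rule card_mono[OF _ cover]) (use fI fH in auto)
  also have "\<dots> \<le> (\<Sum>P\<in>I. card (H P))" by (rule card_UN_le[OF fI])
  also have "\<dots> = (r choose 2) * ((n-2) choose (r-2))" using cH cI by simp
  finally show "card {e2 \<in> adm n r {e1}. \<not> (\<exists>x. e1 \<inter> e2 = {x})} \<le> (r choose 2) * ((n-2) choose (r-2))" .
qed

lemma prob_bind_set:
  assumes "finite A" "A \<noteq> {}"
  shows "measure_pmf.prob (bind_pmf (pmf_of_set A) f) X
         = (\<Sum>a\<in>A. measure_pmf.prob (f a) X) / real (card A)"
proof -
  have "ennreal (measure_pmf.prob (bind_pmf (pmf_of_set A) f) X)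
        = emeasure (bind_pmf (pmf_of_set A) f) X"
    by (simp add: measure_pmf.emeasure_eq_measure ennreal_of_nat_eq_real_of_nat)
  also have "\<dots> = (\<integral>\<^sup>+x. emeasure (f x) X \<partial>measure_pmf (pmf_of_set A))" by simp
  also have "\<dots> = (\<Sum>a\<in>A. emeasure (f a) X) / card A"
    using assms by (simp add: nn_integral_pmf_of_set)
  also have "\<dots> = (\<Sum>a\<in>A. ennreal (measure_pmf.prob (f a) X)) / ennreal (real (card A))"
    by (simp add: measure_pmf.emeasure_eq_measure ennreal_of_nat_eq_real_of_nat)
  also have "\<dots> = ennreal (\<Sum>a\<in>A. measure_pmf.prob (f a) X) / ennreal (real (card A))"
    by (subst sum_ennreal) auto
  also have "\<dots> = ennreal ((\<Sum>a\<in>A. measure_pmf.prob (f a) X) / real (card A))"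
    using assms by (intro divide_ennreal) (auto intro: sum_nonneg simp: card_gt_0_iff)
  finally show ?thesis
    by (subst (asm) ennreal_inj) (auto intro!: divide_nonneg_nonneg sum_nonneg)
qed

lemma step_prob:
  assumes "None \<notin> X"
  shows "measure_pmf.prob (bind_pmf (proc_step n r F)
           (\<lambda>w. case w of None \<Rightarrow> return_pmf None | Some e \<Rightarrow> g e)) X
         = (\<Sum>e\<in>adm n r F. measure_pmf.prob (g e) X) / real (card (adm n r F))"
proof (cases "adm n r F = {}")
  case True then show ?thesis using assms by (simp add: proc_step_def bind_return_pmf)
next
  case False
  show ?thesis using False
    by (simp add: proc_step_def bind_map_pmf prob_bind_set finite_adm)
qed

definition EV :: "(nat set \<times> nat set \<times> nat set) option set" where
  "EV = {Some (e1, e2, e3) | e1 e2 e3. is_star {e1, e2, e3}}"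

definition P3 :: "nat \<Rightarrow> nat \<Rightarrow> nat set \<Rightarrow> nat set \<Rightarrow> real" where
  "P3 n r e1 e2 = real (card {e3 \<in> adm n r {e1,e2}. is_star {e1,e2,e3}}) / real (card (adm n r {e1,e2}))"

definition P2 :: "nat \<Rightarrow> nat \<Rightarrow> nat set \<Rightarrow> real" where
  "P2 n r e1 = (\<Sum>e2\<in>adm n r {e1}. P3 n r e1 e2) / real (card (adm n r {e1}))"

lemma PrA3_eq: "PrA3 n r = (\<Sum>e1\<in>adm n r {}. P2 n r e1) / real (card (adm n r {}))"
proof -
  have NE: "None \<notin> EV" unfolding EV_def by auto
  have p3: "measure_pmf.prob (bind_pmf (proc_step n r {e1,e2})
           (\<lambda>w. case w of None \<Rightarrow> return_pmf None | Some e3 \<Rightarrow> return_pmf (Some (e1,e2,e3)))) EV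
         = P3 n r e1 e2" for e1 e2
  proof -
    have "(\<Sum>e3\<in>adm n r {e1,e2}. measure_pmf.prob (return_pmf (Some (e1,e2,e3))) EV)
         = (\<Sum>e3\<in>adm n r {e1,e2}. if is_star {e1,e2,e3} then 1 else 0)"
      by (rule sum.cong) (auto simp: EV_def indicator_def)
    also have "\<dots> = real (card {e3 \<in> adm n r {e1,e2}. is_star {e1,e2,e3}})"
      by (simp add: sum.If_cases finite_adm Int_def)
    finally show ?thesis by (simp add: step_prob[OF NE] P3_def)
  qed
  have p2: "measure_pmf.prob (bind_pmf (proc_step n r {e1}) (\<lambda>o2. case o2 of None \<Rightarrow> return_pmf None
      | Some e2 \<Rightarrow> bind_pmf (proc_step n r {e1,e2})
           (\<lambda>w. case w of None \<Rightarrow> return_pmf None | Some e3 \<Rightarrow> return_pmf (Some (e1,e2,e3))))) EV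
      = P2 n r e1" for e1
    by (simp only: step_prob[OF NE, of n r "{e1}"] p3 P2_def)
  show ?thesis unfolding PrA3_def first3_def EV_def[symmetric]
    by (simp only: step_prob[OF NE, of n r "{}"] p2)
qed

lemma avg_le:
  assumes "\<And>a. a \<in> A \<Longrightarrow> f a \<le> c" "0 \<le> c"
  shows "(\<Sum>a\<in>A. f a) / real (card A) \<le> (c::real)"
proof (cases "finite A \<and> A \<noteq> {}")
  case True
  have "(\<Sum>a\<in>A. f a) \<le> (\<Sum>a\<in>A. c)" by (rule sum_mono) (rule assms(1))
  then have "(\<Sum>a\<in>A. f a) \<le> real (card A) * c" by simp
  moreover have "real (card A) > 0" using True by (simp add: card_gt_0_iff)
  ultimately show ?thesis by (simp add: divide_le_eq mult.commute)
next
  case False then have "card A = 0" by auto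
  then show ?thesis using assms by simp
qed

lemma avg_ge:
  assumes "finite A" "A \<noteq> {}" "\<And>a. a \<in> A \<Longrightarrow> c \<le> f a"
  shows "(c::real) \<le> (\<Sum>a\<in>A. f a) / real (card A)"
proof -
  have "(\<Sum>a\<in>A. c) \<le> (\<Sum>a\<in>A. f a)" by (rule sum_mono) (rule assms(3))
  then have "real (card A) * c \<le> (\<Sum>a\<in>A. f a)" by simp
  moreover have "real (card A) > 0" using assms by (simp add: card_gt_0_iff)
  ultimately show ?thesis by (simp add: le_divide_eq mult.commute)
qed

lemma P3_nonneg: "0 \<le> P3 n r e1 e2" unfolding P3_def by simp

lemma bounds:
  assumes r2: "2 \<le> r" and nr: "4*r \<le> n"
  defines "S \<equiv> real ((n-2*r+1) choose (r-1))"
    and "Mlo \<equiv> real ((r-1)^2 * ((n-2*r+1) choose (r-2)))"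
    and "Thi \<equiv> real (((n-1) choose (r-1)) + (r-1)^2 * ((n-2) choose (r-2)))"
    and "Kl \<equiv> real (r * ((n-r) choose (r-1)))"
    and "B2 \<equiv> real ((r choose 2) * ((n-2) choose (r-2)))"
  shows "PrA3 n r \<le> S / (S + Mlo)" and "S / Thi * (Kl / (Kl + B2)) \<le> PrA3 n r"
proof -
  have Spos: "S > 0" unfolding S_def using r2 nr by (simp add: zero_less_binomial_iff)
  have Mnn: "Mlo \<ge> 0" unfolding Mlo_def by simp
  have Klpos: "Kl > 0" unfolding Kl_def using r2 nr by (simp add: zero_less_binomial_iff)
  have B2nn: "B2 \<ge> 0" unfolding B2_def by simp
  have nr2: "2*r \<le> n" using nr by simp
  have adm0: "e \<in> adm n r {} \<longleftrightarrow> e \<subseteq> {1..n} \<and> card e = r" for e unfolding adm_def by auto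
  have adm1: "e2 \<in> adm n r {e1} \<Longrightarrow> e2 \<subseteq> {1..n} \<and> card e2 = r \<and> e2 \<noteq> e1" for e1 e2
    unfolding adm_def by auto
  have up3: "P3 n r e1 e2 \<le> S / (S + Mlo)" if h1: "e1 \<in> adm n r {}" and h2: "e2 \<in> adm n r {e1}" for e1 e2
  proof (cases "\<exists>x. e1 \<inter> e2 = {x}")
    case True
    then obtain x where x: "e1 \<inter> e2 = {x}" by blast
    have a: "e1 \<subseteq> {1..n}" "card e1 = r" using h1 adm0 by auto
    have b: "e2 \<subseteq> {1..n}" "card e2 = r" using h2 adm1 by auto
    note f = F1[OF r2 nr2 a b x]
    have c: "real (card (adm n r {e1,e2})) \<ge> S + Mlo"
      using f(2) unfolding S_def Mlo_def by (simp only: of_nat_add[symmetric] of_nat_le_iff)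
    have "P3 n r e1 e2 = S / real (card (adm n r {e1,e2}))"
      unfolding P3_def f(1) S_def ..
    also have "\<dots> \<le> S / (S + Mlo)"
      using c Spos Mnn by (intro divide_left_mono) auto
    finally show ?thesis .
  next
    case False
    have "e1 \<noteq> e2" using h2 adm1 by auto
    then have "{e3 \<in> adm n r {e1,e2}. is_star {e1,e2,e3}} = {}" using F2[OF _ False] by blast
    then have "P3 n r e1 e2 = 0" unfolding P3_def by (subst \<open>_ = {}\<close>) simp
    then show ?thesis using Spos Mnn by simp
  qed
  have lo3: "S / Thi \<le> P3 n r e1 e2" if h1: "e1 \<in> adm n r {}" and h2: "e2 \<in> adm n r {e1}"
     and x: "e1 \<inter> e2 = {x}" for e1 e2 x
  proof -
    have a: "e1 \<subseteq> {1..n}" "card e1 = r" using h1 adm0 by auto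
    have b: "e2 \<subseteq> {1..n}" "card e2 = r" using h2 adm1 by auto
    note f = F1[OF r2 nr2 a b x]
    have c: "real (card (adm n r {e1,e2})) \<le> Thi"
      using f(3) unfolding Thi_def by (simp only: of_nat_le_iff)
    have c2: "real (card (adm n r {e1,e2})) \<ge> S"
      using f(2) unfolding S_def by linarith
    have "S / Thi \<le> S / real (card (adm n r {e1,e2}))"
      using c c2 Spos by (intro divide_left_mono) auto
    also have "\<dots> = P3 n r e1 e2"
      unfolding P3_def f(1) S_def ..
    finally show ?thesis .
  qed
  have up2: "P2 n r e1 \<le> S / (S + Mlo)" if h1: "e1 \<in> adm n r {}" for e1
    unfolding P2_def
  proof (rule avg_le)
    show "P3 n r e1 a \<le> S / (S + Mlo)" if "a \<in> adm n r {e1}" for a using up3[OF h1 that] .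
    show "0 \<le> S / (S + Mlo)" using Spos Mnn by simp
  qed
  have lo2: "S / Thi * (Kl / (Kl + B2)) \<le> P2 n r e1" if h1: "e1 \<in> adm n r {}" for e1
  proof -
    have a: "e1 \<subseteq> {1..n}" "card e1 = r" using h1 adm0 by auto
    define G where "G = {e2 \<in> adm n r {e1}. \<exists>x. e1 \<inter> e2 = {x}}"
    define Bd where "Bd = {e2 \<in> adm n r {e1}. \<not> (\<exists>x. e1 \<inter> e2 = {x})}"
    note f = F3[OF r2 nr2 a, folded G_def Bd_def]
    have cG: "real (card G) = Kl" unfolding Kl_def f(1) ..
    have cB: "real (card Bd) \<le> B2" unfolding B2_def using f(2) by (simp only: of_nat_le_iff)
    have part: "adm n r {e1} = G \<union> Bd" "G \<inter> Bd = {}" unfolding G_def Bd_def by auto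
    have fG: "finite G" "finite Bd" unfolding G_def Bd_def using finite_adm by auto
    have D: "real (card (adm n r {e1})) = Kl + real (card Bd)"
      using part fG cG by (simp add: card_Un_disjoint)
    have Dpos: "real (card (adm n r {e1})) > 0" using D Klpos by simp
    have "Kl * (S / Thi) = (\<Sum>e2\<in>G. S / Thi)" using cG by simp
    also have "\<dots> \<le> (\<Sum>e2\<in>G. P3 n r e1 e2)"
    proof (rule sum_mono)
      fix e2 assume "e2 \<in> G"
      then obtain x where "e2 \<in> adm n r {e1}" "e1 \<inter> e2 = {x}" unfolding G_def by blast
      then show "S / Thi \<le> P3 n r e1 e2" using lo3[OF h1] by blast
    qed
    also have "\<dots> \<le> (\<Sum>e2\<in>adm n r {e1}. P3 n r e1 e2)"
      by (rule sum_mono2[OF finite_adm]) (auto simp: G_def P3_nonneg)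
    finally have sm: "Kl * (S / Thi) \<le> (\<Sum>e2\<in>adm n r {e1}. P3 n r e1 e2)" .
    have Thipos: "S / Thi \<ge> 0" using Spos unfolding Thi_def by simp
    have "S / Thi * (Kl / (Kl + B2)) \<le> S / Thi * (Kl / real (card (adm n r {e1})))"
      using D cB Klpos Thipos by (intro mult_left_mono divide_left_mono) auto
    also have "\<dots> = Kl * (S / Thi) / real (card (adm n r {e1}))" by simp
    also have "\<dots> \<le> P2 n r e1" unfolding P2_def
      using sm Dpos by (intro divide_right_mono) auto
    finally show ?thesis .
  qed
  show "PrA3 n r \<le> S / (S + Mlo)" unfolding PrA3_eq
  proof (rule avg_le)
    show "P2 n r a \<le> S / (S + Mlo)" if "a \<in> adm n r {}" for a using up2[OF that] .
    show "0 \<le> S / (S + Mlo)" using Spos Mnn by simp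
  qed
  have ne: "adm n r {} \<noteq> {}"
  proof -
    have "{1..r} \<in> adm n r {}" using adm0 nr by auto
    then show ?thesis by blast
  qed
  show "S / Thi * (Kl / (Kl + B2)) \<le> PrA3 n r" unfolding PrA3_eq
    by (rule avg_ge[OF finite_adm ne]) (rule lo2)
qed

lemma alg1:
  fixes a b c k x :: real
  assumes "a > 0" "a * b = c * x" "c = a + k"
  shows "b = (1 + k / a) * x"
proof -
  have "b = c * x / a" using assms by (simp add: field_simps)
  also have "\<dots> = (1 + k / a) * x" using assms by (simp add: field_simps)
  finally show ?thesis .
qed

lemma s1: assumes "k \<le> (m::nat)" "j = m + d + 1"
  shows "real (j choose k) = (1 + real k / real (j - k)) * real ((m+d) choose k)"
proof -
  have jk: "k < j" using assms by simp
  have id: "(j - k) * (j choose k) = j * ((j - 1) choose k)" by (rule binomial_absorb_comp)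
  have jm: "j - 1 = m + d" using assms by simp
  have pos: "real (j - k) > 0" using jk by simp
  have "real (j - k) * real (j choose k) = real j * real ((m+d) choose k)"
    using arg_cong[OF id, of real] jm by (simp only: of_nat_mult)
  moreover have "real j = real (j - k) + real k" using jk by simp
  ultimately show ?thesis using pos by (rule alg1[rotated])
qed

lemma binom_ratio:
  assumes "k \<le> m"
  shows "real ((m+d) choose k) \<le> real (m choose k) * exp (real k * real d / real (m+1-k))"
proof (induction d)
  case 0 then show ?case by simp
next
  case (Suc d)
  define j where "j = m + d + 1"
  have jk: "k < j" using assms unfolding j_def by simp
  have eq: "real (j choose k) = (1 + real k / real (j - k)) * real ((m+d) choose k)"
    using s1[OF assms j_def] .
  have L: "real (m+1-k) > 0" using assms by simp
  have L2: "real (m+1-k) \<le> real (j - k)" using assms unfolding j_def by simp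
  have le1: "real k / real (j - k) \<le> real k / real (m+1-k)"
    using L L2 by (intro divide_left_mono) auto
  have "1 + real k / real (j - k) \<le> exp (real k / real (m+1-k))"
    by (rule order_trans[OF add_left_mono[OF le1] exp_ge_add_one_self])
  then have "real (j choose k) \<le> exp (real k / real (m+1-k)) * real ((m+d) choose k)"
    unfolding eq by (intro mult_right_mono) auto
  also have "\<dots> \<le> exp (real k / real (m+1-k)) * (real (m choose k) * exp (real k * real d / real (m+1-k)))"
    using Suc by (intro mult_left_mono) auto
  also have "\<dots> = real (m choose k) * exp (real k * real (Suc d) / real (m+1-k))"
  proof -
    have "real k / real (m+1-k) + real k * real d / real (m+1-k) = real k * real (Suc d) / real (m+1-k)"
      by (simp add: add_divide_distrib[symmetric] algebra_simps)
    then show ?thesis by (simp add: mult_exp_exp mult.assoc mult.left_commute)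
  qed
  finally show ?case unfolding j_def by simp
qed

lemma binom_down:
  shows "real (m choose (k+1)) * real (k+1) = real (m choose k) * real (m - k)"
proof -
  have a: "Suc k * (m choose Suc k) = m * ((m - 1) choose k)" by (rule binomial_absorption)
  have b: "(m - k) * (m choose k) = m * ((m - 1) choose k)" by (rule binomial_absorb_comp)
  have "(m choose (k+1)) * (k+1) = (m choose k) * (m - k)" using a b by (simp add: mult.commute)
  then have "real ((m choose (k+1)) * (k+1)) = real ((m choose k) * (m - k))" by (rule arg_cong)
  then show ?thesis by (simp only: of_nat_mult)
qed

lemma rsq:
  fixes r :: "nat \<Rightarrow> nat"
  assumes rsmall: "(\<lambda>n. real (r n)) \<in> o(\<lambda>n. sqrt (real n))"
  shows "(\<lambda>n. real (r n)^2 / real n) \<longlonglongrightarrow> 0"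
proof -
  have "(\<lambda>n. real (r n) * real (r n)) \<in> o(\<lambda>n. sqrt (real n) * sqrt (real n))"
    by (rule landau_o.small.mult[OF rsmall rsmall])
  then have "(\<lambda>n. real (r n)^2) \<in> o(\<lambda>n. real n)"
    by (simp add: power2_eq_square)
  then show ?thesis by (rule smalloD_tendsto)
qed

lemma alg_gam:
  fixes R N :: real
  assumes "4*R \<le> N" "0 \<le> R" "0 < N"
  shows "N \<le> (1 + 12*R/N) * (N - 3*R + 3)"
proof -
  have h: "36*R^2 \<le> 9*R*N" using mult_left_mono[OF assms(1), of "9*R"] assms(2)
    by (simp add: power2_eq_square algebra_simps)
  have "(1 + 12*R/N) * (N - 3*R + 3) = (N^2 + 9*R*N + 3*N - 36*R^2 + 36*R)/N"
    using assms by (simp add: field_simps power2_eq_square)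
  moreover have "N^2 \<le> N^2 + 9*R*N + 3*N - 36*R^2 + 36*R" using h assms by linarith
  ultimately show ?thesis using assms by (simp add: le_divide_eq power2_eq_square)
qed

lemma alg_ratio:
  fixes c D N g :: real
  assumes "0 \<le> c" "0 < D" "0 < N" "N \<le> g * D"
  shows "c / D \<le> c / N * g"
proof -
  have "c * N \<le> c * (g * D)" using assms by (intro mult_left_mono) auto
  then show ?thesis using assms by (simp add: field_simps)
qed

lemma alg_B2:
  fixes R N e Cd C' B2 :: real
  assumes "4*R \<le> N" "1 \<le> R" "0 \<le> e" "0 \<le> C'"
    and "B2 \<le> R^2 * (e * Cd)" and "Cd * (N - 2*R + 2) = C' * (R - 1)"
  shows "B2 \<le> (e * (2*R^2/N)) * (R * C')"
proof -
  have Npos: "N > 0" and D: "N - 2*R + 2 > 0" using assms by auto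
  have q: "(R-1)/(N-2*R+2) \<le> 2*R/N"
  proof -
    have h: "4*R*R \<le> R*N" using mult_right_mono[OF assms(1), of R] assms by (simp add: mult.commute)
    have e1: "(R-1)*N = R*N - N" "2*R*(N-2*R+2) = 2*(R*N) - 4*R*R + 4*R" by (simp_all add: algebra_simps)
    have "(R-1)*N \<le> 2*R*(N-2*R+2)" unfolding e1 using h assms by linarith
    then show ?thesis using Npos D by (simp add: divide_simps mult.commute)
  qed
  have Cd: "Cd = C' * ((R-1)/(N-2*R+2))" using assms(6) D by (simp add: field_simps)
  have "B2 \<le> R^2 * e * C' * ((R-1)/(N-2*R+2))" using assms(5) Cd by (simp add: mult.assoc)
  also have "\<dots> \<le> R^2 * e * C' * (2*R/N)"
    using q assms by (intro mult_left_mono) auto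
  also have "\<dots> = (e * (2*R^2/N)) * (R * C')" by (simp add: field_simps power2_eq_square)
  finally show ?thesis .
qed

lemma alg_Thi:
  fixes R N e S Cm T1 T2 Thi a g :: real
  assumes "0 \<le> e" "0 \<le> S" "0 \<le> a" "0 \<le> g" "1 \<le> R" "N - 3*R + 3 > 0"
    and "Thi = T1 + (R-1)^2 * T2" "T1 \<le> S * e" "T2 \<le> Cm * e"
    and "Cm * (N - 3*R + 3) = S * (R - 1)"
    and "(R-1)^3 / (N - 3*R + 3) \<le> a * (1 + g)"
  shows "Thi \<le> S * (e * (1 + g) * (1 + a))"
proof -
  have Cm0: "Cm = S * (R - 1) / (N - 3*R + 3)" using assms(6) by (simp add: eq_divide_eq assms(10))
  have Cm: "(R-1)^2 * Cm = S * ((R-1)^3 / (N - 3*R + 3))" unfolding Cm0 using assms(6)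
    by (simp add: field_simps power3_eq_cube power2_eq_square)
  have "Thi \<le> S * e + (R-1)^2 * (Cm * e)"
  proof -
    have "(R-1)^2 * T2 \<le> (R-1)^2 * (Cm * e)" using assms(9) by (intro mult_left_mono) auto
    then show ?thesis using assms(7,8) by linarith
  qed
  also have "(R-1)^2 * (Cm * e) = S * ((R-1)^3 / (N - 3*R + 3)) * e" using Cm by (simp add: mult.assoc[symmetric])
  also have "\<dots> \<le> S * (a * (1 + g)) * e"
    using assms by (intro mult_right_mono mult_left_mono) auto
  also have "S * e + S * (a * (1 + g)) * e \<le> S * (e * (1 + g) * (1 + a))"
  proof -
    have "e * (1 + a * (1 + g)) \<le> e * ((1 + g) * (1 + a))"
      using assms by (intro mult_left_mono) (auto simp: algebra_simps)
    then show ?thesis using assms by (auto simp: algebra_simps intro: mult_left_mono)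
  qed
  finally show ?thesis by simp
qed

lemma alg_exp:
  fixes x R N D :: real
  assumes "0 \<le> x" "x \<le> 2*R^2" "N/4 \<le> D" "0 < N"
  shows "x / D \<le> 8*R^2/N"
proof -
  have "x / D \<le> (2*R^2) / (N/4)" using assms by (intro frac_le) auto
  also have "\<dots> = 8*R^2/N" by simp
  finally show ?thesis .
qed

lemma alg_up:
  fixes P S M a :: real
  assumes "0 < S" "0 \<le> a" "S * a \<le> M" "P \<le> S / (S + M)"
  shows "P * (1 + a) \<le> 1"
proof -
  have p1: "0 < S + S * a" using assms by (simp add: add_pos_nonneg)
  have p2: "0 < S + M" using assms p1 by linarith
  have "S / (S + M) \<le> S / (S + S * a)"
    by (rule divide_left_mono) (use assms p1 p2 in \<open>auto intro: mult_pos_pos\<close>)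
  also have "\<dots> = 1 / (1 + a)" using assms p1 by (simp add: field_simps)
  finally have "P \<le> 1 / (1 + a)" using assms(4) by linarith
  then show ?thesis using assms by (simp add: field_simps)
qed

lemma alg_M:
  fixes S R D N Cm :: real
  assumes "0 \<le> S" "1 \<le> R" "0 < D" "D \<le> N" "Cm * D = S * (R - 1)"
  shows "S * ((R-1)^3 / N) \<le> (R-1)^2 * Cm"
proof -
  have Cm0: "Cm = S * (R - 1) / D" using assms(3) by (simp add: eq_divide_eq assms(5))
  have "S * ((R-1)^3 / N) \<le> S * ((R-1)^3 / D)" using assms
    by (intro mult_left_mono divide_left_mono) auto
  also have "\<dots> = (R-1)^2 * Cm" unfolding Cm0 using assms(3)
    by (simp add: field_simps power3_eq_cube power2_eq_square)
  finally show ?thesis .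
qed

lemma alg_low:
  fixes P S Thi Kl B2 X e g a :: real
  assumes "0 < S" "0 < Kl" "0 \<le> B2" "0 < e" "0 \<le> g" "0 \<le> a" "0 \<le> X"
    and "Thi \<le> S * (e * (1 + g) * (1 + a))" "B2 \<le> X * Kl"
    and "S / Thi * (Kl / (Kl + B2)) \<le> P" "0 < Thi"
  shows "1 / (e * (1 + g)) * (1 / (1 + X)) \<le> P * (1 + a)"
proof -
  have Y: "0 < e * (1 + g) * (1 + a)" using assms by simp
  have s1: "1 / (e * (1 + g) * (1 + a)) \<le> S / Thi"
    using assms Y by (simp add: divide_simps mult.commute)
  have s2: "1 / (1 + X) \<le> Kl / (Kl + B2)"
  proof -
    have "Kl / (Kl + X * Kl) \<le> Kl / (Kl + B2)" using assms
      by (intro divide_left_mono) auto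
    moreover have "Kl / (Kl + X * Kl) = 1 / (1 + X)" using assms by (simp add: field_simps)
    ultimately show ?thesis by simp
  qed
  have "1 / (e * (1 + g) * (1 + a)) * (1 / (1 + X)) \<le> S / Thi * (Kl / (Kl + B2))"
    using s1 s2 assms by (intro mult_mono) auto
  then have "1 / (e * (1 + g) * (1 + a)) * (1 / (1 + X)) \<le> P" using assms(10) by linarith
  then have "1 / (e * (1 + g) * (1 + a)) * (1 / (1 + X)) * (1 + a) \<le> P * (1 + a)"
    using assms by (intro mult_right_mono) auto
  moreover have "1 / (e * (1 + g) * (1 + a)) * (1 / (1 + X)) * (1 + a) = 1 / (e * (1 + g)) * (1 / (1 + X))"
  proof -
    have "1 / (e * (1 + g) * (1 + a)) * (1 + a) = 1 / (e * (1 + g))" using assms by simp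
    then show ?thesis using assms by (simp add: mult_ac)
  qed
  ultimately show ?thesis by simp
qed

lemma key:
  assumes r2: "2 \<le> r" and nr: "4*r \<le> n"
  shows "PrA3 n r * (1 + (real r - 1)^3 / real n) \<le> 1"
    and "1 / (exp (8*real r^2/real n) * (1 + 12*real r/real n)) *
           (1 / (1 + exp (8*real r^2/real n) * (2*real r^2/real n)))
         \<le> PrA3 n r * (1 + (real r - 1)^3 / real n)"
proof -
  define R where "R = real r"
  define N where "N = real n"
  define a where "a = (R - 1)^3 / N"
  define e where "e = exp (8*R^2/N)"
  define g where "g = 12*R/N"
  define X where "X = e * (2*R^2/N)"
  define m where "m = n - 2*r + 1"
  note bd = bounds[OF r2 nr, folded m_def]
  define S where "S = real (m choose (r-1))"
  define Cm where "Cm = real (m choose (r-2))"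
  define Cp where "Cp = real ((n-r) choose (r-1))"
  define Cq where "Cq = real ((n-r) choose (r-2))"
  define T1 where "T1 = real ((n-1) choose (r-1))"
  define T2 where "T2 = real ((n-2) choose (r-2))"
  have R2: "2 \<le> R" unfolding R_def using r2 by simp
  have NR: "4*R \<le> N" unfolding R_def N_def using nr by simp
  have Npos: "0 < N" using R2 NR by simp
  have sq1: "(R-1)*(2*R-2) \<le> 2*R^2"
  proof -
    have "(R-1)*(R-1) \<le> R*R" by (rule mult_mono) (use R2 in auto)
    moreover have "(R-1)*(2*R-2) = 2*((R-1)*(R-1))" by (simp add: algebra_simps)
    ultimately show ?thesis unfolding power2_eq_square by linarith
  qed
  have sq2: "(R-2)*(2*R-3) \<le> 2*R^2"
  proof -
    have "(R-2)*(2*R-3) \<le> R*(2*R)" by (rule mult_mono) (use R2 in auto)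
    then show ?thesis by (simp add: power2_eq_square)
  qed
  have sq3: "(R-2)*(R-2) \<le> 2*R^2"
  proof -
    have "(R-2)*(R-2) \<le> R*(2*R)" by (rule mult_mono) (use R2 in auto)
    then show ?thesis by (simp add: power2_eq_square)
  qed
  have cr1: "real (r-1) = R - 1" unfolding R_def using r2 by (simp add: of_nat_diff)
  have cr2: "real (r-2) = R - 2" unfolding R_def using r2 by (simp add: of_nat_diff)
  have c3: "real (n - 3*r + 3) = N - 3*R + 3" unfolding R_def N_def using nr by (simp add: of_nat_diff)
  have c4: "real (n - 3*r + 4) = N - 3*R + 4" unfolding R_def N_def using nr by (simp add: of_nat_diff)
  have c5: "real (n - 2*r + 3) = N - 2*R + 3" unfolding R_def N_def using nr by (simp add: of_nat_diff)
  have c6: "real (n - 2*r + 2) = N - 2*R + 2" unfolding R_def N_def using nr by (simp add: of_nat_diff)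
  have epos: "0 < e" unfolding e_def by simp
  have T1: "T1 \<le> S * e"
  proof -
    have h: "real ((m + (2*r-2)) choose (r-1)) \<le> real (m choose (r-1)) *
               exp (real (r-1) * real (2*r-2) / real (m+1-(r-1)))"
      by (rule binom_ratio) (use nr r2 m_def in simp)
    have i1: "m + (2*r-2) = n - 1" "m + 1 - (r-1) = n - 3*r + 3" unfolding m_def using nr r2 by auto
    have i2: "real (2*r-2) = 2*R - 2" unfolding R_def using r2 by (simp add: of_nat_diff)
    have ex: "real (r-1) * real (2*r-2) / real (m+1-(r-1)) \<le> 8*R^2/N"
      unfolding i1 cr1 i2 c3
      by (rule alg_exp) (use R2 sq1 sq2 sq3 NR Npos in auto)
    show ?thesis using h unfolding i1(1) T1_def S_def e_def
      by (rule order_trans) (use ex in \<open>intro mult_left_mono, auto\<close>)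
  qed
  have T2: "T2 \<le> Cm * e"
  proof -
    have h: "real ((m + (2*r-3)) choose (r-2)) \<le> real (m choose (r-2)) *
               exp (real (r-2) * real (2*r-3) / real (m+1-(r-2)))"
      by (rule binom_ratio) (use nr r2 m_def in simp)
    have i1: "m + (2*r-3) = n - 2" "m + 1 - (r-2) = n - 3*r + 4" unfolding m_def using nr r2 by auto
    have i2: "real (2*r-3) = 2*R - 3" unfolding R_def using r2 by (simp add: of_nat_diff)
    have ex: "real (r-2) * real (2*r-3) / real (m+1-(r-2)) \<le> 8*R^2/N"
      unfolding i1 cr2 i2 c4
      by (rule alg_exp) (use R2 sq1 sq2 sq3 NR Npos in auto)
    show ?thesis using h unfolding i1(1) T2_def Cm_def e_def
      by (rule order_trans) (use ex in \<open>intro mult_left_mono, auto\<close>)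
  qed
  have T5: "T2 \<le> Cq * e"
  proof -
    have h: "real (((n-r) + (r-2)) choose (r-2)) \<le> real ((n-r) choose (r-2)) *
               exp (real (r-2) * real (r-2) / real ((n-r)+1-(r-2)))"
      by (rule binom_ratio) (use nr r2 in simp)
    have i1: "(n-r) + (r-2) = n - 2" "(n-r) + 1 - (r-2) = n - 2*r + 3" using nr r2 by auto
    have ex: "real (r-2) * real (r-2) / real ((n-r)+1-(r-2)) \<le> 8*R^2/N"
      unfolding i1 cr2 c5
      by (rule alg_exp) (use R2 sq1 sq2 sq3 NR Npos in auto)
    show ?thesis using h unfolding i1(1) T2_def Cq_def e_def
      by (rule order_trans) (use ex in \<open>intro mult_left_mono, auto\<close>)
  qed
  have Id3: "Cm * (N - 3*R + 3) = S * (R - 1)"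
  proof -
    have h: "real (m choose (r-2+1)) * real (r-2+1) = real (m choose (r-2)) * real (m - (r-2))"
      by (rule binom_down)
    have i: "r-2+1 = r-1" "m - (r-2) = n - 3*r + 3" unfolding m_def using r2 nr by auto
    show ?thesis using h unfolding i cr1 c3 S_def Cm_def by simp
  qed
  have Id6: "Cq * (N - 2*R + 2) = Cp * (R - 1)"
  proof -
    have h: "real ((n-r) choose (r-2+1)) * real (r-2+1) = real ((n-r) choose (r-2)) * real ((n-r) - (r-2))"
      by (rule binom_down)
    have i: "r-2+1 = r-1" "(n-r) - (r-2) = n - 2*r + 2" using r2 nr by auto
    show ?thesis using h unfolding i cr1 c6 Cp_def Cq_def by simp
  qed
  have Spos: "0 < S" unfolding S_def m_def using r2 nr by (simp add: zero_less_binomial_iff)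
  have apos: "0 \<le> a" unfolding a_def using R2 Npos by simp
  have Mlo: "real ((r-1)^2 * (m choose (r-2))) = (R-1)^2 * Cm" unfolding Cm_def cr1[symmetric] by simp
  have Sa: "S * a \<le> (R-1)^2 * Cm" unfolding a_def
    by (rule alg_M[OF _ _ _ _ Id3]) (use Spos R2 NR in auto)
  show "PrA3 n r * (1 + (real r - 1)^3 / real n) \<le> 1"
    using alg_up[OF Spos apos Sa] bd(1) unfolding Mlo S_def[symmetric] a_def R_def N_def by simp
  have Thi: "real (((n-1) choose (r-1)) + (r-1)^2 * ((n-2) choose (r-2))) = T1 + (R-1)^2 * T2"
    unfolding T1_def T2_def cr1[symmetric] by simp
  have gam: "(R-1)^3 / (N - 3*R + 3) \<le> a * (1 + g)"
    unfolding a_def g_def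
    by (rule alg_ratio) (use R2 Npos NR alg_gam[OF NR _ Npos] in auto)
  have ThiB: "T1 + (R-1)^2 * T2 \<le> S * (e * (1 + g) * (1 + a))"
    by (rule alg_Thi[OF _ _ apos _ _ _ refl T1 T2 Id3 gam]) (use epos Spos R2 NR Npos in \<open>auto simp: g_def\<close>)
  have Kl: "real (r * ((n-r) choose (r-1))) = R * Cp" unfolding R_def Cp_def by simp
  have B2a: "real ((r choose 2) * ((n-2) choose (r-2))) \<le> R^2 * (e * Cq)"
  proof -
    have "r choose 2 \<le> r^2" by (rule binomial_le_pow) (use r2 in simp)
    then have "real (r choose 2) \<le> R^2" unfolding R_def by (metis of_nat_le_iff of_nat_power)
    moreover have "T2 \<le> e * Cq" using T5 by (simp add: mult.commute)
    ultimately have "real (r choose 2) * T2 \<le> R^2 * (e * Cq)"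
      by (intro mult_mono) (auto simp: T2_def)
    then show ?thesis unfolding T2_def by simp
  qed
  have B2: "real ((r choose 2) * ((n-2) choose (r-2))) \<le> X * (R * Cp)"
    unfolding X_def
    by (rule alg_B2[OF NR _ _ _ B2a Id6]) (use R2 epos in \<open>auto simp: Cp_def\<close>)
  have Cppos: "0 < Cp" unfolding Cp_def using r2 nr by (simp add: zero_less_binomial_iff)
  have Thipos: "0 < T1 + (R-1)^2 * T2"
  proof -
    have "0 < T1" unfolding T1_def using r2 nr by (simp add: zero_less_binomial_iff)
    moreover have "0 \<le> (R-1)^2 * T2" unfolding T2_def by simp
    ultimately show ?thesis by linarith
  qed
  have bd2: "S / (T1 + (R-1)^2 * T2) * (R * Cp / (R * Cp + real ((r choose 2) * ((n-2) choose (r-2)))))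
     \<le> PrA3 n r" using bd(2) unfolding Thi Kl S_def[symmetric] .
  have low: "1 / (e * (1 + g)) * (1 / (1 + X)) \<le> PrA3 n r * (1 + a)"
    by (rule alg_low[OF Spos _ _ epos _ apos _ ThiB B2 bd2 Thipos])
       (use Cppos R2 Npos epos in \<open>auto simp: g_def X_def\<close>)
  then show "1 / (exp (8*real r^2/real n) * (1 + 12*real r/real n)) *
           (1 / (1 + exp (8*real r^2/real n) * (2*real r^2/real n)))
         \<le> PrA3 n r * (1 + (real r - 1)^3 / real n)"
    unfolding e_def g_def X_def a_def R_def N_def .
qed

theorem lemma2:
  fixes r :: "nat \<Rightarrow> nat"
  assumes r2: "\<And>n. r n \<ge> 2"
    and rsmall: "(\<lambda>n. real (r n)) \<in> o(\<lambda>n. sqrt (real n))"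
  shows "(\<exists>\<epsilon>1 \<epsilon>2 :: nat \<Rightarrow> real. \<epsilon>1 \<longlonglongrightarrow> 0 \<and> \<epsilon>2 \<longlonglongrightarrow> 0 \<and>
            (\<forall>\<^sub>F n in sequentially.
               PrA3 n (r n) = (1 - \<epsilon>1 n) /
                 (1 + (real (r n) - 1) ^ 3 / real n * (1 + \<epsilon>2 n))))
       \<and> (\<forall>c::real. c \<ge> 0 \<longrightarrow> (\<lambda>n. real (r n) / real n powr (1/3)) \<longlonglongrightarrow> c \<longrightarrow>
            (\<lambda>n. PrA3 n (r n)) \<longlonglongrightarrow> 1 / (1 + c ^ 3))"
proof -
  define A where "A = (\<lambda>n. (real (r n) - 1) ^ 3 / real n)"
  define Q where "Q = (\<lambda>n. PrA3 n (r n) * (1 + A n))"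
  have Anonneg: "0 \<le> A n" for n unfolding A_def using r2[of n] by simp
  have rsq': "(\<lambda>n. real (r n)^2 / real n) \<longlonglongrightarrow> 0" by (rule rsq[OF rsmall])
  have rn: "(\<lambda>n. real (r n) / real n) \<longlonglongrightarrow> 0"
  proof (rule tendsto_sandwich[OF _ _ tendsto_const rsq'])
    show "\<forall>\<^sub>F n in sequentially. 0 \<le> real (r n) / real n" by simp
    show "\<forall>\<^sub>F n in sequentially. real (r n) / real n \<le> real (r n)^2 / real n"
    proof (rule always_eventually, rule allI)
      fix n
      have "real (r n) \<le> real (r n)^2" using r2[of n] by (simp add: power2_eq_square)
      then show "real (r n) / real n \<le> real (r n)^2 / real n" by (simp add: divide_right_mono)
    qed
  qed
  have ev4: "\<forall>\<^sub>F n in sequentially. 4 * r n \<le> n"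
  proof -
    have "\<forall>\<^sub>F n in sequentially. real (r n) / real n < 1/4"
      using rn by (rule order_tendstoD) simp
    moreover have "\<forall>\<^sub>F n in sequentially. n > 0" by (rule eventually_gt_at_top)
    ultimately show ?thesis
    proof eventually_elim
      case (elim n)
      then have "real (r n) < real n / 4" by (simp add: divide_less_eq)
      then show ?case by linarith
    qed
  qed
  have l1: "(\<lambda>n. 8 * real (r n)^2 / real n) \<longlonglongrightarrow> 0"
    using tendsto_mult_right_zero[OF rsq', of 8] by (simp add: times_divide_eq_right)
  have l2: "(\<lambda>n. 12 * real (r n) / real n) \<longlonglongrightarrow> 0"
    using tendsto_mult_right_zero[OF rn, of 12] by (simp add: times_divide_eq_right)
  have l3: "(\<lambda>n. 2 * real (r n)^2 / real n) \<longlonglongrightarrow> 0"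
    using tendsto_mult_right_zero[OF rsq', of 2] by (simp add: times_divide_eq_right)
  have low: "(\<lambda>n. 1 / (exp (8*real (r n)^2/real n) * (1 + 12*real (r n)/real n)) *
           (1 / (1 + exp (8*real (r n)^2/real n) * (2*real (r n)^2/real n)))) \<longlonglongrightarrow>
         1 / (exp 0 * (1 + 0)) * (1 / (1 + exp 0 * 0))"
    by (intro tendsto_intros l1 l2 l3) auto
  have Qlim: "Q \<longlonglongrightarrow> 1"
  proof (rule tendsto_sandwich[OF _ _ _ tendsto_const])
    show "(\<lambda>n. 1 / (exp (8*real (r n)^2/real n) * (1 + 12*real (r n)/real n)) *
           (1 / (1 + exp (8*real (r n)^2/real n) * (2*real (r n)^2/real n)))) \<longlonglongrightarrow> 1"
      using low by simp
    show "\<forall>\<^sub>F n in sequentially. 1 / (exp (8*real (r n)^2/real n) * (1 + 12*real (r n)/real n)) *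
           (1 / (1 + exp (8*real (r n)^2/real n) * (2*real (r n)^2/real n))) \<le> Q n"
      using ev4 by eventually_elim (use key(2)[OF r2] in \<open>simp add: Q_def A_def\<close>)
    show "\<forall>\<^sub>F n in sequentially. Q n \<le> 1"
      using ev4 by eventually_elim (use key(1)[OF r2] in \<open>simp add: Q_def A_def\<close>)
  qed
  have part1: "\<exists>\<epsilon>1 \<epsilon>2 :: nat \<Rightarrow> real. \<epsilon>1 \<longlonglongrightarrow> 0 \<and> \<epsilon>2 \<longlonglongrightarrow> 0 \<and>
            (\<forall>\<^sub>F n in sequentially.
               PrA3 n (r n) = (1 - \<epsilon>1 n) /
                 (1 + (real (r n) - 1) ^ 3 / real n * (1 + \<epsilon>2 n)))"
  proof (intro exI conjI)
    show "(\<lambda>n. 1 - Q n) \<longlonglongrightarrow> 0" using tendsto_diff[OF tendsto_const Qlim, of 1] by simp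
    show "(\<lambda>n. 0::real) \<longlonglongrightarrow> 0" by simp
    show "\<forall>\<^sub>F n in sequentially. PrA3 n (r n) = (1 - (1 - Q n)) /
                 (1 + (real (r n) - 1) ^ 3 / real n * (1 + 0))"
    proof (rule always_eventually, rule allI)
      fix n
      have "1 + (real (r n) - 1) ^ 3 / real n > 0" using Anonneg[of n] unfolding A_def by linarith
      then show "PrA3 n (r n) = (1 - (1 - Q n)) / (1 + (real (r n) - 1) ^ 3 / real n * (1 + 0))"
        unfolding Q_def A_def by simp
    qed
  qed
  have part2: "(\<lambda>n. PrA3 n (r n)) \<longlonglongrightarrow> 1 / (1 + c ^ 3)"
    if c0: "c \<ge> 0" and cl: "(\<lambda>n. real (r n) / real n powr (1/3)) \<longlonglongrightarrow> c" for c
  proof -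
    have cube: "(\<lambda>n. real (r n)^3 / real n) \<longlonglongrightarrow> c^3"
    proof -
      have "(\<lambda>n. (real (r n) / real n powr (1/3))^3) \<longlonglongrightarrow> c^3" by (intro tendsto_intros cl)
      moreover have "\<forall>\<^sub>F n in sequentially. (real (r n) / real n powr (1/3))^3 = real (r n)^3 / real n"
        using eventually_gt_at_top[of 0]
      proof eventually_elim
        case (elim n)
        have "(real n powr (1/3))^3 = real n powr (real 3 * (1/3))"
          using elim by (subst powr_power) auto
        also have "\<dots> = real n" using elim by simp
        finally show ?case by (simp add: power_divide)
      qed
      ultimately show ?thesis using Lim_transform_eventually by fastforce
    qed
    have diff: "(\<lambda>n. real (r n)^3 / real n - A n) \<longlonglongrightarrow> 0"
    proof (rule tendsto_sandwich[OF _ _ tendsto_const])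
      show "(\<lambda>n. 3 * real (r n)^2 / real n) \<longlonglongrightarrow> 0"
        using tendsto_mult_right_zero[OF rsq', of 3] by (simp add: times_divide_eq_right)
      show "\<forall>\<^sub>F n in sequentially. 0 \<le> real (r n)^3 / real n - A n"
      proof (rule always_eventually, rule allI)
        fix n
        have "(real (r n) - 1)^3 \<le> real (r n)^3" using r2[of n] by (intro power_mono) auto
        then show "0 \<le> real (r n)^3 / real n - A n" unfolding A_def
          by (simp add: divide_right_mono)
      qed
      show "\<forall>\<^sub>F n in sequentially. real (r n)^3 / real n - A n \<le> 3 * real (r n)^2 / real n"
      proof (rule always_eventually, rule allI)
        fix n
        define x where "x = real (r n)"
        have x1: "1 \<le> x" unfolding x_def using r2[of n] by simp
        have "x^3 - (x - 1)^3 = 3*x^2 - 3*x + 1" by (simp add: algebra_simps power3_eq_cube power2_eq_square)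
        also have "\<dots> \<le> 3*x^2" using x1 by simp
        finally have "x^3 - (x-1)^3 \<le> 3*x^2" .
        then have "(x^3 - (x-1)^3) / real n \<le> 3*x^2 / real n" by (simp add: divide_right_mono)
        then show "real (r n)^3 / real n - A n \<le> 3 * real (r n)^2 / real n"
          unfolding A_def x_def[symmetric] by (simp add: diff_divide_distrib)
      qed
    qed
    have Alim: "A \<longlonglongrightarrow> c^3"
    proof -
      have "(\<lambda>n. real (r n)^3 / real n - (real (r n)^3 / real n - A n)) \<longlonglongrightarrow> c^3 - 0"
        by (intro tendsto_diff cube diff)
      then show ?thesis by simp
    qed
    have "(\<lambda>n. Q n / (1 + A n)) \<longlonglongrightarrow> 1 / (1 + c^3)"
      using c0 by (intro tendsto_intros Qlim Alim) (auto simp: add_nonneg_eq_0_iff)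
    moreover have "Q n / (1 + A n) = PrA3 n (r n)" for n
    proof -
      have "1 + A n > 0" using Anonneg[of n] by linarith
      then show ?thesis unfolding Q_def by simp
    qed
    ultimately show ?thesis by simp
  qed
  show ?thesis using part1 part2 by blast
qed

end
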